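(* For every nonzero integer $n$, $B_n<0.65\log|n|+2.24$. That is, if $S$ is any set of positive integers with the property $D(n)$, then the number of elements $x\in S$ with $n^2<x<|n|^3$ is less than $0.65\log|n|+2.24$.
   Context: Let $n$ be a nonzero integer. A set of positive integers $S$ has the property $D(n)$ if $xy+n$ is a perfect square for all distinct $x,y\in S$. Define $B_n=\sup\{|S\cap(n^2,|n|^3)| : S \text{ has the property } D(n)\}$. Here $\log$ is the natural logarithm. *)

theory Defs
  imports Complex_Main
begin

definition has_property_D :: "int \<Rightarrow> int set \<Rightarrow> bool" where
  "has_property_D n S \<longleftrightarrow> (\<forall>x\<in>S. x > 0) \<and>
     (\<forall>x\<in>S. \<forall>y\<in>S. x \<noteq> y \<longrightarrow> (\<exists>k::int. x * y + n = k ^ 2))"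

end

theory Submission
  imports Defs
begin

lemma ident:
  fixes n a b c r s t :: int
  assumes r: "r^2 = a*b+n" and s: "s^2 = a*c+n" and t: "t^2 = b*c+n"
  shows "(a*t - r*s)^2 = a*(n*(a+b+c)+2*a*b*c-2*r*s*t) + n^2"
proof -
  have "(a*t - r*s)^2 = a^2*t^2 - 2*a*(r*s*t) + r^2*s^2" by (simp add: power2_eq_square algebra_simps)
  also have "\<dots> = a^2*(b*c+n) - 2*a*(r*s*t) + (a*b+n)*(a*c+n)" by (simp add: r s t)
  finally show ?thesis by (simp add: power2_eq_square algebra_simps)
qed

lemma prodid:
  fixes n a b c r s t :: int
  assumes r: "r^2 = a*b+n" and s: "s^2 = a*c+n" and t: "t^2 = b*c+n"
  shows "(a*t - r*s)^2 * (a*t + r*s)^2 = n^2 * (a*(b+c-a)+n)^2"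
proof -
  have "(a*t - r*s)^2 * (a*t + r*s)^2 = (a^2*t^2 - r^2*s^2)^2" by (simp add: power2_eq_square algebra_simps)
  also have "\<dots> = (a^2*(b*c+n) - (a*b+n)*(a*c+n))^2" by (simp add: r s t)
  finally show ?thesis by (simp add: power2_eq_square algebra_simps)
qed

lemma sumid:
  fixes n a b c r s t :: int
  assumes r: "r^2 = a*b+n" and s: "s^2 = a*c+n" and t: "t^2 = b*c+n"
  shows "(a*t - r*s)^2 + (a*t + r*s)^2 = 2*(a^2*(b*c+n) + (a*b+n)*(a*c+n))"
proof -
  have "(a*t - r*s)^2 + (a*t + r*s)^2 = 2*(a^2*t^2 + r^2*s^2)" by (simp add: power2_eq_square algebra_simps)
  then show ?thesis by (simp add: r s t power_mult_distrib)
qed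

lemma triple:
  fixes n a b c r s t :: int
  assumes r: "r^2 = a*b+n" and s: "s^2 = a*c+n" and t: "t^2 = b*c+n"
    and r0: "r \<ge> 0" and s0: "s \<ge> 0" and t0: "t \<ge> 0"
    and n0: "n \<noteq> 0" and an: "n^2 < a" and ab: "a < b" and bc: "b < c"
  shows "4*(b*c+n) \<le> (b+c-a)^2"
    and "(b+c-a)^2 \<noteq> 4*(b*c+n) \<Longrightarrow>
      (a+n^2)*(2*(a^2*(b*c+n) + (a*b+n)*(a*c+n)) - (a+n^2)) \<le> n^2*(a*(b+c-a)+n)^2"
proof -
  define X where "X = (a*t - r*s)^2"
  define Y where "Y = (a*t + r*s)^2"
  define e where "e = n*(a+b+c)+2*a*b*c-2*r*s*t"
  have a0: "a > 0" using an by (metis le_less_trans zero_le_power2)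
  have XY: "X*Y = n^2 * (a*(b+c-a)+n)^2" unfolding X_def Y_def using prodid[OF r s t] .
  have XpY: "X + Y = 2*(a^2*(b*c+n) + (a*b+n)*(a*c+n))" unfolding X_def Y_def using sumid[OF r s t] .
  have Xe: "X = a*e + n^2" unfolding X_def e_def using ident[OF r s t] .
  have ars: "a*t \<ge> 0" "r*s \<ge> 0" using a0 r0 s0 t0 by auto
  have XleY: "X \<le> Y" unfolding X_def Y_def
  proof -
    have "(a*t + r*s)^2 - (a*t - r*s)^2 = 4*(a*t)*(r*s)" by (simp add: power2_eq_square algebra_simps)
    moreover have "4*(a*t)*(r*s) \<ge> 0" using ars by simp
    ultimately show "(a*t - r*s)^2 \<le> (a*t + r*s)^2" by linarith
  qed
  have e0: "e \<ge> 0"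
  proof (rule ccontr)
    assume "\<not> e \<ge> 0"
    then have "e \<le> -1" by simp
    then have "a*e \<le> a*(-1)" using a0 by (intro mult_left_mono) auto
    then have "X < 0" using Xe an by linarith
    moreover have "X \<ge> 0" unfolding X_def by simp
    ultimately show False by simp
  qed
  have mono: "Z*(X+Y-Z) \<le> X*Y" if "Z \<le> X" for Z
  proof -
    have "X*Y - Z*(X+Y-Z) = (X-Z)*(Y-Z)" by (simp add: algebra_simps)
    moreover have "(X-Z)*(Y-Z) \<ge> 0" using that XleY by simp
    ultimately show ?thesis by linarith
  qed
  have keyR: "(a*(b+c-a)+n)^2 - (X+Y-n^2) = a^2*((b+c-a)^2 - 4*(b*c+n))"
    unfolding XpY by (simp add: power2_eq_square algebra_simps)
  have "a*e \<ge> 0" using a0 e0 by simp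
  then have "n^2 \<le> X" using Xe by linarith
  from mono[OF this] have "n^2*(X+Y-n^2) \<le> n^2*(a*(b+c-a)+n)^2" using XY by simp
  moreover have "n^2 > 0" using n0 by simp
  ultimately have "X+Y-n^2 \<le> (a*(b+c-a)+n)^2" by simp
  then have "a^2*((b+c-a)^2 - 4*(b*c+n)) \<ge> 0" using keyR by linarith
  then show "4*(b*c+n) \<le> (b+c-a)^2" using a0
    by (simp add: zero_le_mult_iff)
  assume ne: "(b+c-a)^2 \<noteq> 4*(b*c+n)"
  have "e \<noteq> 0"
  proof
    assume "e = 0"
    then have "X = n^2" using Xe by simp
    then have "n^2*(Y) = n^2*(a*(b+c-a)+n)^2" using XY by simp
    moreover have "n^2 \<noteq> 0" using n0 by simp
    ultimately have "Y = (a*(b+c-a)+n)^2" by simp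
    then have "a^2*((b+c-a)^2 - 4*(b*c+n)) = 0" using keyR \<open>X = n^2\<close> by simp
    then show False using a0 ne by simp
  qed
  then have "e \<ge> 1" using e0 by simp
  then have "a*e \<ge> a*1" using a0 by (intro mult_left_mono) auto
  then have "a + n^2 \<le> X" using Xe by simp
  from mono[OF this] show "(a+n^2)*(2*(a^2*(b*c+n) + (a*b+n)*(a*c+n)) - (a+n^2)) \<le> n^2*(a*(b+c-a)+n)^2"
    using XpY XY by simp
qed


lemma regpoly:
  fixes n a b c :: int
  assumes n0: "n \<noteq> 0" and an: "n^2 < a" and ab: "a < b" and bc: "b < c"
    and R: "4*(b*c+n) \<le> (b+c-a)^2"
  shows "c > 4*a"
proof -
  have "\<bar>n\<bar>*1 \<le> \<bar>n\<bar>*\<bar>n\<bar>" using n0 by (intro mult_left_mono) auto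
  moreover have "n^2 = \<bar>n\<bar>*\<bar>n\<bar>" by (simp add: power2_eq_square)
  ultimately have nn: "\<bar>n\<bar> \<le> n^2" by simp
  have a0: "a > 0" using an by (metis le_less_trans zero_le_power2)
  have "(c-b)^2 - 2*a*(c-b) - 3*a^2 \<ge> 4*a*(b-a) + 4*n"
    using R by (simp add: power2_eq_square algebra_simps)
  moreover have "4*a*(b-a) \<ge> 4*a*1" using ab a0 by (intro mult_left_mono) auto
  moreover have "4*a + 4*n > 0" using an nn by linarith
  ultimately have "(c-b-3*a)*(c-b+a) > 0" by (simp add: power2_eq_square algebra_simps)
  moreover have "c-b+a > 0" using a0 bc by linarith
  ultimately have "c-b-3*a > 0" using zero_less_mult_pos2 by blast
  then show ?thesis using ab by linarith
qed

lemma irrpoly: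
  fixes n a b c :: int
  assumes n5: "\<bar>n\<bar> \<ge> 5" and an: "n^2 < a" and ab: "a < b" and bc: "b < c"
    and I: "(a+n^2)*(2*(a^2*(b*c+n) + (a*b+n)*(a*c+n)) - (a+n^2)) \<le> n^2*(a*(b+c-a)+n)^2"
  shows "c > 5*b"
proof (rule ccontr)
  assume "\<not> c > 5*b"
  then have c5: "c \<le> 5*b" by simp
  define N where "N = n^2"
  have nN: "\<bar>n\<bar> * 5 \<le> N" unfolding N_def using n5
    by (metis abs_mult_self_eq mult.commute mult_right_mono abs_ge_zero power2_eq_square)
  have N0: "N > 0" using nN n5 by linarith
  have a0: "a > 0" using an N0 N_def by linarith
  have LHS: "(a+N)*(2*(a^2*(b*c+n) + (a*b+n)*(a*c+n)) - (a+N)) = (a+N)*(4*a^2*b*c + 2*n*a*(a+b+c) + N - a)"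
    unfolding N_def by (simp add: power2_eq_square algebra_simps)
  have q0: "a*(b+c-a)+n > 0"
  proof -
    have "a*(b+c-a) \<ge> a*1" using a0 ab bc by (intro mult_left_mono) auto
    then show ?thesis using an nN N_def by linarith
  qed
  have q1: "a*(b+c-a)+n \<le> a*(b+c)"
  proof -
    have "a*a \<ge> a*1" using a0 by (intro mult_left_mono) auto
    then show ?thesis using an nN N_def by (simp add: algebra_simps)
  qed
  have RHS: "N*(a*(b+c-a)+n)^2 \<le> N*(a*(b+c))^2"
    using q0 q1 N0 by (intro mult_left_mono power_mono) auto
  have bc36: "5*(b+c)^2 \<le> 36*(b*c)"
  proof -
    have "(5*b-c)*(5*c-b) \<ge> 0" using c5 bc ab a0 by simp
    then show ?thesis by (simp add: power2_eq_square algebra_simps)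
  qed
  have t1: "5*(N*(a*(b+c))^2) \<le> 36*N*a^2*(b*c)"
    using mult_left_mono[OF bc36, of "N*a^2"] N0 by (simp add: power2_eq_square algebra_simps)
  have t2: "2*n*a*(a+b+c) \<ge> -(6*\<bar>n\<bar>*a*c)"
  proof -
    have "\<bar>2*n*a*(a+b+c)\<bar> = 2*\<bar>n\<bar>*a*(a+b+c)" using a0 ab bc by (simp add: abs_mult)
    also have "\<dots> \<le> 2*\<bar>n\<bar>*a*(3*c)" using a0 ab bc by (intro mult_left_mono) auto
    finally show ?thesis by linarith
  qed
  have "(a+N)*(4*a^2*b*c + 2*n*a*(a+b+c) + N - a) \<ge> (a+N)*(4*a^2*b*c - 6*\<bar>n\<bar>*a*c - a)"
  proof -
    have "4*a^2*b*c - 6*\<bar>n\<bar>*a*c - a \<le> 4*a^2*b*c + 2*n*a*(a+b+c) + N - a" using t2 N0 by linarith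
    then show ?thesis using a0 N0 by (intro mult_left_mono) auto
  qed
  moreover have "5*((a+N)*(4*a^2*b*c - 6*\<bar>n\<bar>*a*c - a)) > 36*N*a^2*(b*c)"
  proof -
    have e1: "5*((a+N)*(4*a^2*b*c)) - 36*N*a^2*(b*c) = a^2*b*c*(20*a - 16*N)"
      by (simp add: power2_eq_square algebra_simps)
    have e2: "a^2*b*c*(20*a - 16*N) \<ge> a^2*b*c*(4*a)"
      using an N_def a0 ab bc by (intro mult_left_mono) auto
    have e3: "5*((a+N)*(6*\<bar>n\<bar>*a*c + a)) \<le> 5*((2*a)*(6*\<bar>n\<bar>*a*c + a))"
    proof -
      have "c > 0" using a0 ab bc by linarith
      then have "6*\<bar>n\<bar>*a*c + a \<ge> 0" using a0 by simp
      then show ?thesis using an N_def a0 by (intro mult_left_mono mult_right_mono) auto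
    qed
    have e4: "5*((2*a)*(6*\<bar>n\<bar>*a*c + a)) < a^2*b*c*(4*a)"
    proof -
      have "a \<ge> 5*\<bar>n\<bar>" using an nN N_def by linarith
      moreover have "b \<ge> 27" using an ab n5 nN N_def by linarith
      ultimately have ab27: "a*b \<ge> (5*\<bar>n\<bar>)*27" using a0 by (intro mult_mono) auto
      have c1: "c \<ge> 1" using a0 ab bc by linarith
      have "4*(a*b)*c \<ge> 4*((5*\<bar>n\<bar>)*27)*c" using ab27 c1 by (intro mult_right_mono) auto
      moreover have "4*((5*\<bar>n\<bar>)*27)*c > 60*\<bar>n\<bar>*c + 10"
      proof -
        have "\<bar>n\<bar>*c \<ge> 5*1" using n5 c1 by (intro mult_mono) auto
        moreover have "4*((5*\<bar>n\<bar>)*27)*c = 540*(\<bar>n\<bar>*c)" "60*\<bar>n\<bar>*c = 60*(\<bar>n\<bar>*c)" by simp_all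
        ultimately show ?thesis by linarith
      qed
      ultimately have "60*\<bar>n\<bar>*c + 10 < 4*(a*b)*c" by linarith
      then have INEQ: "a^2*(60*\<bar>n\<bar>*c + 10) < a^2*(4*(a*b)*c)" using a0 by (intro mult_strict_left_mono) auto
      have E1: "5*((2*a)*(6*\<bar>n\<bar>*a*c + a)) = a^2*(60*\<bar>n\<bar>*c + 10)" by (simp add: power2_eq_square ring_distribs mult_ac)
      have E2: "a^2*b*c*(4*a) = a^2*(4*(a*b)*c)" by (simp add: power2_eq_square mult_ac)
      show ?thesis unfolding E1 E2 by (rule INEQ)
    qed
    have "5*((a+N)*(4*a^2*b*c - 6*\<bar>n\<bar>*a*c - a)) = 5*((a+N)*(4*a^2*b*c)) - 5*((a+N)*(6*\<bar>n\<bar>*a*c + a))"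
      by (simp add: algebra_simps)
    then show ?thesis using e1 e2 e3 e4 by linarith
  qed
  ultimately have "5*((a+N)*(2*(a^2*(b*c+n) + (a*b+n)*(a*c+n)) - (a+N))) > 36*N*a^2*(b*c)"
    unfolding LHS by linarith
  moreover have "(a+N)*(2*(a^2*(b*c+n) + (a*b+n)*(a*c+n)) - (a+N)) \<le> N*(a*(b+c-a)+n)^2"
    using I unfolding N_def .
  ultimately show False using RHS t1 by linarith
qed


lemma exp_le_aux:
  fixes y :: real
  assumes "0 \<le> y" "y \<le> 1" "(1 + y + y^2)^16 \<le> B"
  shows "exp (16*y) \<le> B"
proof -
  have "exp (16*y) = exp y ^ 16" using exp_of_nat_mult[of 16 y] by simp
  also have "\<dots> \<le> (1 + y + y^2)^16" using exp_bound[OF assms(1,2)] by (intro power_mono) auto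
  finally show ?thesis using assms(3) by linarith
qed
lemma ln4: "(1.17::real) \<le> ln 4"
proof -
  have "exp (16*(1.17/16)) \<le> (4::real)" by (rule exp_le_aux) (simp_all add: power2_eq_square power_divide)
  then show ?thesis by (subst ln_ge_iff) auto
qed
lemma ln5: "(1.54::real) \<le> ln 5"
proof -
  have "exp (16*(1.54/16)) \<le> (5::real)" by (rule exp_le_aux) (simp_all add: power2_eq_square power_divide)
  then show ?thesis by (subst ln_ge_iff) auto
qed
lemma final:
  fixes m :: nat and N :: int
  assumes m3: "m \<ge> 3" and lt: "4*5^(m-3) < N"
  shows "real m < 0.65 * ln (real_of_int N) + 2.24"
proof -
  have "real_of_int (4*5^(m-3)) < real_of_int N" using lt by linarith
  then have lt': "4*5^(m-3) < real_of_int N" by simp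
  have p: "(0::real) < 4*5^(m-3)" by simp
  have "ln (4*5^(m-3)) < ln (real_of_int N)" using lt' p by (intro ln_less_cancel_iff[THEN iffD2]) linarith+
  moreover have "ln (4*5^(m-3) :: real) = ln 4 + real (m-3) * ln 5" by (simp add: ln_mult ln_realpow)
  ultimately have F0: "ln 4 + real (m-3) * ln 5 < ln (real_of_int N)" by simp
  have km: "real (m-3) = real m - 3" using m3 by simp
  have F1: "ln 4 + real m * ln 5 - 3 * ln 5 < ln (real_of_int N)" using F0 unfolding km by (simp add: algebra_simps)
  have "(real m - 3) * (154/100) \<le> (real m - 3) * ln 5" using ln5 m3 by (intro mult_left_mono) auto
  then have F2: "real m * (154/100) - 3 * (154/100) \<le> real m * ln 5 - 3 * ln 5" by (simp only: left_diff_distrib)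
  have F3: "(117/100::real) \<le> ln 4" using ln4 by simp
  have F4: "real m \<ge> 3" using m3 by simp
  have "real m < 65/100 * ln (real_of_int N) + 224/100" using F1 F2 F3 F4 by linarith
  then show ?thesis by simp
qed


lemma tripS:
  fixes n a b c :: int
  assumes D: "has_property_D n S" and n0: "n \<noteq> 0"
    and aS: "a \<in> S" and bS: "b \<in> S" and cS: "c \<in> S"
    and an: "n^2 < a" and ab: "a < b" and bc: "b < c"
  shows "4*(b*c+n) \<le> (b+c-a)^2"
    and "(b+c-a)^2 \<noteq> 4*(b*c+n) \<Longrightarrow>
      (a+n^2)*(2*(a^2*(b*c+n) + (a*b+n)*(a*c+n)) - (a+n^2)) \<le> n^2*(a*(b+c-a)+n)^2"
proof -
  have sq: "\<exists>r. r^2 = x*y+n \<and> r \<ge> 0" if "x \<in> S" "y \<in> S" "x \<noteq> y" for x y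
  proof -
    have "\<exists>k::int. x*y+n = k^2"
      using conjunct2[OF D[unfolded has_property_D_def], rule_format, OF that] .
    then obtain k where kk: "x*y+n = k^2" by (elim exE)
    have "\<bar>k\<bar>^2 = x*y+n" unfolding power2_abs using kk by (rule sym)
    moreover have "\<bar>k\<bar> \<ge> 0" by simp
    ultimately show ?thesis by (intro exI[of _ "\<bar>k\<bar>"] conjI)
  qed
  obtain r where r: "r^2 = a*b+n" "r \<ge> 0" using sq[OF aS bS] ab by auto
  obtain s where s: "s^2 = a*c+n" "s \<ge> 0" using sq[OF aS cS] ab bc by auto
  obtain t where t: "t^2 = b*c+n" "t \<ge> 0" using sq[OF bS cS] bc by auto
  show "4*(b*c+n) \<le> (b+c-a)^2" using triple(1)[OF r(1) s(1) t(1) r(2) s(2) t(2) n0 an ab bc] .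
  show "(b+c-a)^2 \<noteq> 4*(b*c+n) \<Longrightarrow>
      (a+n^2)*(2*(a^2*(b*c+n) + (a*b+n)*(a*c+n)) - (a+n^2)) \<le> n^2*(a*(b+c-a)+n)^2"
    using triple(2)[OF r(1) s(1) t(1) r(2) s(2) t(2) n0 an ab bc] .
qed

lemma gap4:
  fixes n a b c :: int
  assumes D: "has_property_D n S" and n0: "n \<noteq> 0"
    and aS: "a \<in> S" and bS: "b \<in> S" and cS: "c \<in> S"
    and an: "n^2 < a" and ab: "a < b" and bc: "b < c"
  shows "c > 4*a"
  using regpoly[OF n0 an ab bc tripS(1)[OF D n0 aS bS cS an ab bc]] .

lemma gap5:
  fixes n a b c :: int
  assumes D: "has_property_D n S" and n5: "\<bar>n\<bar> \<ge> 5"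
    and aS: "a \<in> S" and bS: "b \<in> S" and cS: "c \<in> S"
    and an: "n^2 < a" and ab: "a < b" and bc: "b < c"
    and R: "(b+c-a)^2 \<noteq> 4*(b*c+n)"
  shows "c > 5*b"
proof -
  have n0: "n \<noteq> 0" using n5 by auto
  show ?thesis using irrpoly[OF n5 an ab bc tripS(2)[OF D n0 aS bS cS an ab bc R]] .
qed

theorem theorem2:
  fixes n :: int and S :: "int set"
  assumes "n \<noteq> 0" and "has_property_D n S"
  shows "real (card (S \<inter> {n ^ 2 <..< \<bar>n\<bar> ^ 3})) < 0.65 * ln (real_of_int \<bar>n\<bar>) + 2.24"
proof -
  note n0 = assms(1) and D = assms(2)
  define T where "T = S \<inter> {n ^ 2 <..< \<bar>n\<bar> ^ 3}"
  have finT: "finite T" unfolding T_def by auto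
  define m where "m = card T"
  have n1: "real_of_int \<bar>n\<bar> \<ge> 1" using n0 by simp
  have lnpos: "ln (real_of_int \<bar>n\<bar>) \<ge> 0" using n1 by simp
  have n3: "\<bar>n\<bar>^3 = \<bar>n\<bar> * n^2" by (simp add: power2_eq_square power3_eq_cube)
  have "real m < 0.65 * ln (real_of_int \<bar>n\<bar>) + 2.24"
  proof (cases "m \<le> 2")
    case True
    then have "real m \<le> 2" by simp
    then have "real m < 65/100 * ln (real_of_int \<bar>n\<bar>) + 224/100" using lnpos by linarith
    then show ?thesis by simp
  next
    case False
    then have m3: "m \<ge> 3" by simp
    define xs where "xs = sorted_list_of_set T"
    define x where "x i = xs ! i" for i
    have len: "length xs = m" unfolding xs_def m_def by simp
    have srt: "sorted_wrt (<) xs" unfolding xs_def by (rule strict_sorted_list_of_set)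
    have lt: "x i < x j" if "i < j" "j < m" for i j
      unfolding x_def using sorted_wrt_nth_less[OF srt that(1)] that len by simp
    have memT: "x i \<in> T" if "i < m" for i
      unfolding x_def using nth_mem[of i xs] that len finT unfolding xs_def by simp
    have xS: "x i \<in> S" if "i < m" for i using memT[OF that] unfolding T_def by simp
    have xlo: "n^2 < x i" if "i < m" for i using memT[OF that] unfolding T_def by simp
    have xhi: "x i < \<bar>n\<bar>^3" if "i < m" for i using memT[OF that] unfolding T_def by simp
    have g2: "x 2 > 4 * x 0"
    proof -
      have A: "x 0 \<in> S" "x 1 \<in> S" "x 2 \<in> S" using xS m3 by auto
      have B: "n^2 < x 0" using xlo m3 by auto
      have C: "x 0 < x 1" "x 1 < x 2" using lt m3 by auto
      show ?thesis using gap4[OF D n0 A B C] .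
    qed
    have n5: "\<bar>n\<bar> \<ge> 5"
    proof (rule ccontr)
      assume "\<not> \<bar>n\<bar> \<ge> 5"
      then have "\<bar>n\<bar> \<le> 4" by simp
      then have "\<bar>n\<bar> * n^2 \<le> 4 * n^2" by (intro mult_right_mono) auto
      moreover have "x 2 < \<bar>n\<bar> * n^2"
      proof -
        have "x 2 < \<bar>n\<bar>^3" using xhi[of 2] m3 by simp
        then show ?thesis using n3 by linarith
      qed
      moreover have "4 * x 0 > 4 * n^2" using xlo[of 0] m3 by simp
      ultimately show False using g2 by linarith
    qed
    have stepg: "x k > 5 * x (k-1)" if "3 \<le> k" "k < m" for k
    proof -
      have S3: "x 0 \<in> S" "x 1 \<in> S" "x (k-1) \<in> S" "x k \<in> S" using xS that by auto
      have L3: "n^2 < x 0" "n^2 < x 1" using xlo that by auto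
      have O3: "x 0 < x 1" "x 1 < x (k-1)" "x (k-1) < x k" using lt that by auto
      have O0: "x 0 < x (k-1)" using O3 by linarith
      show ?thesis
      proof (cases "(x (k-1) + x k - x 0)^2 \<noteq> 4*(x (k-1) * x k + n)")
        case True
        show ?thesis using gap5[OF D n5 S3(1) S3(3) S3(4) L3(1) O0 O3(3) True] .
      next
        case F0: False
        show ?thesis
        proof (cases "(x (k-1) + x k - x 1)^2 \<noteq> 4*(x (k-1) * x k + n)")
          case True
          show ?thesis using gap5[OF D n5 S3(2) S3(3) S3(4) L3(2) O3(2) O3(3) True] .
        next
          case False
          then have "(x (k-1) + x k - x 0)^2 = (x (k-1) + x k - x 1)^2" using F0 by simp
          moreover have "x (k-1) + x k - x 0 \<ge> 0" "x (k-1) + x k - x 1 \<ge> 0"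
            using O3 O0 L3 zero_le_power2[of n] by linarith+
          ultimately have "x (k-1) + x k - x 0 = x (k-1) + x k - x 1"
            using power2_eq_iff_nonneg by blast
          then have "x 0 = x 1" by simp
          then show ?thesis using O3 by simp
        qed
      qed
    qed
    have grow: "k < m \<Longrightarrow> x k > 4 * 5^(k-2) * n^2" if "2 \<le> k" for k
      using that
    proof (induction k rule: dec_induct)
      case base
      then show ?case using g2 xlo[of 0] by simp
    next
      case (step k)
      have A: "x (Suc k) > 5 * x k" using step.prems step.hyps(1) stepg[of "Suc k"] by simp
      have B: "x k > 4 * 5^(k-2) * n^2" using step.IH step.prems by simp
      have "Suc k - 2 = Suc (k-2)" using step.hyps(1) by simp
      then have "4 * 5^(Suc k - 2) * n^2 = 5 * (4 * 5^(k-2) * n^2)" by simp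
      then show ?case using A B by linarith
    qed
    have "x (m-1) > 4 * 5^(m-3) * n^2"
    proof -
      have h1: "2 \<le> m-1" "m-1 < m" using m3 by auto
      have h2: "m-1-2 = m-3" by simp
      show ?thesis using grow[OF h1(1) h1(2)] unfolding h2 .
    qed
    moreover have "x (m-1) < \<bar>n\<bar> * n^2"
    proof -
      have "x (m-1) < \<bar>n\<bar>^3" using xhi[of "m-1"] m3 by simp
      then show ?thesis using n3 by linarith
    qed
    ultimately have "4 * 5^(m-3) * n^2 < \<bar>n\<bar> * n^2" by linarith
    then have "4 * 5^(m-3) < \<bar>n\<bar>"
    proof (rule contrapos_pp)
      assume "\<not> 4 * 5^(m-3) < \<bar>n\<bar>"
      then have "\<bar>n\<bar> \<le> 4 * 5^(m-3)" by simp
      then have "\<bar>n\<bar> * n^2 \<le> 4 * 5^(m-3) * n^2" by (intro mult_right_mono) auto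
      then show "\<not> 4 * 5^(m-3) * n^2 < \<bar>n\<bar> * n^2" by simp
    qed
    then show ?thesis by (rule final[OF m3])
  qed
  then show ?thesis unfolding m_def T_def .
qed

end
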